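(* Let $k,n$ be positive integers with $k\leqslant n$ and let $Y\subseteq\mathrm{Conf}_k([n])$ be an order ideal with respect to the Bruhat order. Then every linear extension of $Y$ is a flag shelling order.
   Context: $[n]:=\{1,\ldots,n\}$. $[n]^i_<$ denotes the set of $i$-element subsets of $[n]$, identified with increasing $i$-tuples; its Bruhat order is $u\leqslant v$ iff $u_j\leqslant v_j$ for all $j\in[i]$. $\mathrm{Conf}_k([n])$ is the set of $k$-tuples $(a_1,\ldots,a_k)$ of pairwise distinct elements of $[n]$. For $x\in\mathrm{Conf}_k([n])$ and $i\in[k]$, $P^{(i)}(x)\in[n]^i_<$ is the increasing rearrangement of $\{x_1,\ldots,x_i\}$. The Bruhat order on $\mathrm{Conf}_k([n])$ is $x\leqslant y$ iff $P^{(i)}(x)\leqslant P^{(i)}(y)$ for all $i\in[k]$. An order ideal is a subset $Y$ with $y\in Y$, $x\leqslant y$ implying $x\in Y$. A linear extension of $Y$ is a tuple $(L_1,\ldots,L_h)$ listing each element of $Y$ exactly once such that $L_i<L_j$ implies $i<j$. For $y\in\mathrm{Conf}_k([n])$ let $P(y):=\{P^{(1)}(y),\ldots,P^{(k)}(y)\}$ (a $k$-element set whose elements are subsets of $[n]$). A sequence $(F_1,\ldots,F_h)$ of distinct $k$-element sets is a shelling order if for all $i<j$ there exists $z<j$ with $|F_z\cap F_j|=|F_j|-1$ and $F_i\cap F_j\subseteq F_z\cap F_j$. A tuple $(a_1,\ldots,a_h)$ listing the elements of $Y$ is a flag shelling order for $Y$ if $(P(a_1),\ldots,P(a_h))$ is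 a shelling order (of the simplicial complex with facets $\{P(y):y\in Y\}$). *)

theory Defs
  imports Main
begin

definition conf :: "nat \<Rightarrow> nat \<Rightarrow> nat list set" where
  "conf k n = {x. length x = k \<and> distinct x \<and> set x \<subseteq> {1..n}}"

definition subset_bruhat_le :: "nat \<Rightarrow> nat set \<Rightarrow> nat set \<Rightarrow> bool" where
  "subset_bruhat_le i u v \<longleftrightarrow>
     (\<forall>j<i. sorted_list_of_set u ! j \<le> sorted_list_of_set v ! j)"

definition Pi :: "nat \<Rightarrow> nat list \<Rightarrow> nat set" where
  "Pi i x = set (take i x)"

definition conf_le :: "nat \<Rightarrow> nat list \<Rightarrow> nat list \<Rightarrow> bool" where
  "conf_le k x y \<longleftrightarrow> (\<forall>i\<in>{1..k}. subset_bruhat_le i (Pi i x) (Pi i y))"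

definition conf_less :: "nat \<Rightarrow> nat list \<Rightarrow> nat list \<Rightarrow> bool" where
  "conf_less k x y \<longleftrightarrow> conf_le k x y \<and> x \<noteq> y"

definition order_ideal :: "nat \<Rightarrow> nat \<Rightarrow> nat list set \<Rightarrow> bool" where
  "order_ideal k n Y \<longleftrightarrow> Y \<subseteq> conf k n \<and>
     (\<forall>y\<in>Y. \<forall>x\<in>conf k n. conf_le k x y \<longrightarrow> x \<in> Y)"

definition linear_extension :: "nat \<Rightarrow> nat list set \<Rightarrow> nat list list \<Rightarrow> bool" where
  "linear_extension k Y L \<longleftrightarrow> distinct L \<and> set L = Y \<and>
     (\<forall>i<length L. \<forall>j<length L. conf_less k (L ! i) (L ! j) \<longrightarrow> i < j)"

definition Pflag :: "nat \<Rightarrow> nat list \<Rightarrow> nat set set" where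
  "Pflag k y = {Pi i y | i. i \<in> {1..k}}"

definition shelling_order :: "nat \<Rightarrow> 'a set list \<Rightarrow> bool" where
  "shelling_order k F \<longleftrightarrow> distinct F \<and> (\<forall>G\<in>set F. finite G \<and> card G = k) \<and>
     (\<forall>j<length F. \<forall>i<j. \<exists>z<j.
        card (F ! z \<inter> F ! j) = card (F ! j) - 1 \<and> F ! i \<inter> F ! j \<subseteq> F ! z \<inter> F ! j)"

definition flag_shelling_order :: "nat \<Rightarrow> nat list set \<Rightarrow> nat list list \<Rightarrow> bool" where
  "flag_shelling_order k Y a \<longleftrightarrow> distinct a \<and> set a = Y \<and>
     shelling_order k (map (Pflag k) a)"

end

theory Submission
  imports Defs
begin

lemma count_sep:
  fixes u v :: "nat set"
  assumes fin: "finite u" "finite v" and cd: "card u = card v"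
    and sep: "\<forall>e\<in>u - v. \<forall>d\<in>v - u. e < d"
  shows "card {e\<in>v. e \<le> t} \<le> card {e\<in>u. e \<le> t}"
proof (cases "\<exists>d\<in>v - u. d \<le> t")
  case True
  then obtain d where d: "d \<in> v - u" "d \<le> t" by blast
  have cuv: "card (u - v) = card (v - u)"
  proof -
    have "card (u - v) = card u - card (u \<inter> v)" using fin by (intro card_Diff_subset_Int) auto
    moreover have "card (v - u) = card v - card (v \<inter> u)" using fin by (intro card_Diff_subset_Int) auto
    ultimately show ?thesis using cd by (metis Int_commute)
  qed
  have ut: "e \<le> t" if "e \<in> u - v" for e
    using sep d that by (meson less_imp_le order_trans)
  have eq1: "{e\<in>u. e \<le> t} = {e\<in>u \<inter> v. e \<le> t} \<union> (u - v)"
    using ut by blast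
  have eq2: "{e\<in>v. e \<le> t} \<subseteq> {e\<in>u \<inter> v. e \<le> t} \<union> (v - u)" by blast
  have "card {e\<in>v. e \<le> t} \<le> card ({e\<in>u \<inter> v. e \<le> t} \<union> (v - u))"
    by (rule card_mono[OF _ eq2]) (use fin in auto)
  also have "\<dots> \<le> card {e\<in>u \<inter> v. e \<le> t} + card (v - u)" by (rule card_Un_le)
  also have "\<dots> = card {e\<in>u \<inter> v. e \<le> t} + card (u - v)" using cuv by simp
  also have "\<dots> = card {e\<in>u. e \<le> t}" unfolding eq1 using fin
    by (subst card_Un_disjoint) auto
  finally show ?thesis .
next
  case False
  then have "{e\<in>v. e \<le> t} \<subseteq> {e\<in>u. e \<le> t}" by blast
  then show ?thesis using fin by (intro card_mono) auto
qed

lemma bruhat_from_count: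
  fixes u v :: "nat set"
  assumes fin: "finite u" "finite v" and cu: "card u = i" and cv: "card v = i"
    and cnt: "\<And>t. card {e\<in>v. e \<le> t} \<le> card {e\<in>u. e \<le> t}"
  shows "subset_bruhat_le i u v"
  unfolding subset_bruhat_le_def
proof (intro allI impI, rule ccontr)
  fix j assume j: "j < i" and nle: "\<not> sorted_list_of_set u ! j \<le> sorted_list_of_set v ! j"
  define su where "su = sorted_list_of_set u"
  define sv where "sv = sorted_list_of_set v"
  have lu: "length su = i" and lv: "length sv = i" using cu cv su_def sv_def by auto
  have ssu: "sorted su" "distinct su" "set su = u" using fin su_def by auto
  have ssv: "sorted sv" "distinct sv" "set sv = v" using fin sv_def by auto
  define t where "t = sv ! j"
  have gt: "su ! j > t" using nle su_def sv_def t_def by simp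
  have A: "(\<lambda>p. sv ! p) ` {..j} \<subseteq> {e\<in>v. e \<le> t}"
  proof
    fix e assume "e \<in> (\<lambda>p. sv ! p) ` {..j}"
    then obtain p where p: "p \<le> j" "e = sv ! p" by auto
    have "sv ! p \<le> sv ! j" using ssv(1) p j lv by (simp add: sorted_nth_mono)
    moreover have "sv ! p \<in> v" using ssv(3) p j lv by auto
    ultimately show "e \<in> {e\<in>v. e \<le> t}" using p t_def by simp
  qed
  have injA: "inj_on (\<lambda>p. sv ! p) {..j}"
    using ssv(2) j lv by (auto simp: inj_on_def nth_eq_iff_index_eq)
  have cA: "card ((\<lambda>p. sv ! p) ` {..j}) = Suc j" using injA by (simp add: card_image)
  have B: "{e\<in>u. e \<le> t} \<subseteq> (\<lambda>p. su ! p) ` {..<j}"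
  proof
    fix e assume e: "e \<in> {e\<in>u. e \<le> t}"
    then obtain p where p: "p < i" "e = su ! p" using ssu(3) lu by (auto simp: in_set_conv_nth)
    have "p < j"
    proof (rule ccontr)
      assume "\<not> p < j"
      then have "su ! j \<le> su ! p" using ssu(1) p lu by (simp add: sorted_nth_mono)
      then show False using gt e p by simp
    qed
    then show "e \<in> (\<lambda>p. su ! p) ` {..<j}" using p by auto
  qed
  have "card {e\<in>u. e \<le> t} \<le> j"
    using card_mono[OF _ B] card_image_le[of "{..<j}" "\<lambda>p. su ! p"] by simp
  moreover have "Suc j \<le> card {e\<in>v. e \<le> t}"
    using card_mono[OF _ A] fin cA by simp
  ultimately show False using cnt[of t] by simp
qed

lemma bruhat_sep:
  fixes u v :: "nat set"
  assumes "finite u" "finite v" "card u = i" "card v = i"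
    and "\<forall>e\<in>u - v. \<forall>d\<in>v - u. e < d"
  shows "subset_bruhat_le i u v"
  using assms by (intro bruhat_from_count count_sep) auto

lemma Pi_nth: "q \<le> length y \<Longrightarrow> Pi q y = (\<lambda>p. y ! p) ` {..<q}"
  unfolding Pi_def by (force simp: set_conv_nth)

lemma Pi_Suc: "p < length y \<Longrightarrow> Pi (Suc p) y = Pi p y \<union> {y ! p}"
  unfolding Pi_def by (simp add: take_Suc_conv_app_nth)

lemma Pi_notin: "distinct y \<Longrightarrow> p < length y \<Longrightarrow> y ! p \<notin> Pi p y"
  by (auto simp: Pi_nth nth_eq_iff_index_eq)

lemma Pi_card: "distinct y \<Longrightarrow> q \<le> length y \<Longrightarrow> card (Pi q y) = q"
  unfolding Pi_def by (simp add: distinct_card)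

lemma Pi_finite[simp]: "finite (Pi q y)"
  unfolding Pi_def by simp

lemma Pi_mono: "a \<le> b \<Longrightarrow> Pi a y \<subseteq> Pi b y"
  unfolding Pi_def by (metis set_take_subset_set_take)

lemma conf_D: "x \<in> conf k n \<Longrightarrow> length x = k \<and> distinct x \<and> set x \<subseteq> {1..n}"
  unfolding conf_def by simp

lemma Pi_inj:
  assumes x: "x \<in> conf k n" and y: "y \<in> conf k n"
    and eq: "\<forall>i\<in>{1..k}. Pi i x = Pi i y"
  shows "x = y"
proof (rule nth_equalityI)
  show "length x = length y" using x y by (simp add: conf_D)
  fix p assume p: "p < length x"
  have lk: "length x = k" "length y = k" using x y by (auto simp: conf_D)
  have e1: "Pi (Suc p) x = Pi (Suc p) y" using eq p lk by auto
  have e0: "Pi p x = Pi p y"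
  proof (cases p)
    case 0 then show ?thesis by (simp add: Pi_def)
  next
    case (Suc q) then show ?thesis using eq p lk by auto
  qed
  have "x ! p \<in> Pi p y \<union> {y ! p}" using e1 Pi_Suc[of p x] Pi_Suc[of p y] p lk by auto
  moreover have "x ! p \<notin> Pi p y" using e0 Pi_notin[of x p] x p by (simp add: conf_D)
  ultimately show "x ! p = y ! p" by auto
qed

lemma chain_mono:
  fixes y :: "nat list"
  assumes inc: "\<And>q. lo < q \<Longrightarrow> q < hi \<Longrightarrow> y ! (q - 1) < y ! q"
  shows "lo \<le> p \<Longrightarrow> p < s \<Longrightarrow> s < hi \<Longrightarrow> y ! p < y ! s"
proof (induction s)
  case 0 then show ?case by simp
next
  case (Suc s)
  have st: "y ! s < y ! Suc s" using inc[of "Suc s"] Suc.prems by simp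
  show ?case
  proof (cases "p = s")
    case True then show ?thesis using st by simp
  next
    case False then have "y ! p < y ! s" using Suc by simp
    then show ?thesis using st by simp
  qed
qed

lemma bruhat_refl: "subset_bruhat_le i u u"
  unfolding subset_bruhat_le_def by simp

lemma one_step_le:
  fixes y y' :: "nat list"
  assumes y: "y \<in> conf k n" and y': "y' \<in> conf k n"
    and m: "1 \<le> m" "m \<le> k"
    and same: "\<forall>q. q \<noteq> m \<longrightarrow> q \<le> k \<longrightarrow> Pi q y' = Pi q y"
    and a: "Pi m y' = Pi (m - 1) y \<union> {a}" and b: "Pi m y = Pi (m - 1) y \<union> {b}"
    and ab: "a < b"
  shows "conf_le k y' y"
  unfolding conf_le_def
proof
  fix q assume q: "q \<in> {1..k}"
  show "subset_bruhat_le q (Pi q y') (Pi q y)"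
  proof (cases "q = m")
    case False then show ?thesis using same q bruhat_refl by simp
  next
    case True
    show ?thesis
    proof (rule bruhat_sep)
      show "card (Pi q y') = q" using y' q by (intro Pi_card) (auto simp: conf_D)
      show "card (Pi q y) = q" using y q by (intro Pi_card) (auto simp: conf_D)
      show "\<forall>e\<in>Pi q y' - Pi q y. \<forall>d\<in>Pi q y - Pi q y'. e < d"
        using True a b ab by auto
    qed auto
  qed
qed

lemma swap_lemma:
  fixes y :: "nat list"
  assumes y: "y \<in> conf k n" and m: "1 \<le> m" "m < k" and lt: "y ! m < y ! (m - 1)"
  defines "y' \<equiv> y[m - 1 := y ! m, m := y ! (m - 1)]"
  shows "y' \<in> conf k n \<and> conf_le k y' y \<and> y' \<noteq> y \<and> (\<forall>q. q \<noteq> m \<longrightarrow> q \<le> k \<longrightarrow> Pi q y' = Pi q y)"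
proof -
  have ly: "length y = k" "distinct y" "set y \<subseteq> {1..n}" using conf_D[OF y] by auto
  have ly': "length y' = k" using ly y'_def by simp
  have sy': "set y' = set y" using ly m y'_def by simp
  have dy': "distinct y'" using ly m y'_def by simp
  have c': "y' \<in> conf k n" using ly' sy' dy' ly unfolding conf_def by simp
  have nth': "\<And>p. p < k \<Longrightarrow> y' ! p = (if p = m - 1 then y ! m else if p = m then y ! (m - 1) else y ! p)"
    using ly m y'_def by (auto simp: nth_list_update)
  have same: "Pi q y' = Pi q y" if q: "q \<noteq> m" "q \<le> k" for q
  proof (cases "q < m")
    case True
    then have "\<forall>p<q. y' ! p = y ! p" using nth' m q by auto
    then show ?thesis using Pi_nth[of q y] Pi_nth[of q y'] ly ly' q by (auto simp: image_def)
  next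
    case False
    then have qm: "m < q" using q by simp
    have "Pi q y' = (\<lambda>p. y' ! p) ` {..<q}" using Pi_nth ly' q by simp
    also have "\<dots> = (\<lambda>p. y ! p) ` {..<q}"
    proof
      show "(\<lambda>p. y' ! p) ` {..<q} \<subseteq> (\<lambda>p. y ! p) ` {..<q}"
      proof
        fix e assume "e \<in> (\<lambda>p. y' ! p) ` {..<q}"
        then obtain p where p: "p < q" "e = y' ! p" by auto
        show "e \<in> (\<lambda>p. y ! p) ` {..<q}"
          using p nth'[of p] q qm m by (auto split: if_splits)
      qed
      show "(\<lambda>p. y ! p) ` {..<q} \<subseteq> (\<lambda>p. y' ! p) ` {..<q}"
      proof
        fix e assume "e \<in> (\<lambda>p. y ! p) ` {..<q}"
        then obtain p where p: "p < q" "e = y ! p" by auto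
        consider "p = m - 1" | "p = m" | "p \<noteq> m - 1" "p \<noteq> m" by blast
        then show "e \<in> (\<lambda>p. y' ! p) ` {..<q}"
        proof cases
          case 1
          then have "y' ! m = e" using nth'[of m] p m by simp
          then show ?thesis using qm by force
        next
          case 2
          then have "y' ! (m - 1) = e" using nth'[of "m - 1"] p m by simp
          then show ?thesis using qm by force
        next
          case 3
          then have "y' ! p = e" using nth'[of p] p q by simp
          then show ?thesis using p by force
        qed
      qed
    qed
    also have "\<dots> = Pi q y" using Pi_nth ly q by simp
    finally show ?thesis .
  qed
  have a: "Pi m y' = Pi (m - 1) y \<union> {y ! m}"
  proof -
    have "Pi m y' = Pi (m - 1) y' \<union> {y' ! (m - 1)}" using Pi_Suc[of "m - 1" y'] m ly' by simp
    moreover have "Pi (m - 1) y' = Pi (m - 1) y" using same m by simp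
    ultimately show ?thesis using nth'[of "m - 1"] m by simp
  qed
  have b: "Pi m y = Pi (m - 1) y \<union> {y ! (m - 1)}" using Pi_Suc[of "m - 1" y] m ly by simp
  have le: "conf_le k y' y"
    using one_step_le[OF y c' _ _ _ a b lt] same m by simp
  have "m - 1 < k" using m by simp
  then have ne: "y' \<noteq> y" using nth'[of "m - 1"] m lt by auto
  show ?thesis using c' le ne same by blast
qed

lemma replace_lemma:
  fixes y :: "nat list"
  assumes y: "y \<in> conf k n" and k: "0 < k" and v: "1 \<le> v" "v < y ! (k - 1)" "v \<notin> set y"
  defines "y' \<equiv> y[k - 1 := v]"
  shows "y' \<in> conf k n \<and> conf_le k y' y \<and> y' \<noteq> y \<and> (\<forall>q. q \<noteq> k \<longrightarrow> q \<le> k \<longrightarrow> Pi q y' = Pi q y)"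
proof -
  have ly: "length y = k" "distinct y" "set y \<subseteq> {1..n}" using conf_D[OF y] by auto
  have ly': "length y' = k" using ly y'_def by simp
  have yk: "y ! (k - 1) \<le> n" using ly k by (meson atLeastAtMost_iff diff_less less_one nth_mem subsetD)
  have sy': "set y' \<subseteq> {1..n}" using set_update_subset_insert[of y "k - 1" v] ly v yk y'_def by auto
  have dy': "distinct y'" unfolding y'_def using ly v by (intro distinct_list_update) auto
  have c': "y' \<in> conf k n" using ly' sy' dy' unfolding conf_def by simp
  have same: "Pi q y' = Pi q y" if q: "q \<noteq> k" "q \<le> k" for q
    using q y'_def unfolding Pi_def by simp
  have a: "Pi k y' = Pi (k - 1) y \<union> {v}"
  proof -
    have "Pi k y' = Pi (k - 1) y' \<union> {y' ! (k - 1)}" using Pi_Suc[of "k - 1" y'] k ly' by simp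
    moreover have "Pi (k - 1) y' = Pi (k - 1) y" using same k by simp
    ultimately show ?thesis using k ly y'_def by simp
  qed
  have b: "Pi k y = Pi (k - 1) y \<union> {y ! (k - 1)}" using Pi_Suc[of "k - 1" y] k ly by simp
  have le: "conf_le k y' y"
    using one_step_le[OF y c' _ _ _ a b v(2)] same k by simp
  have ne: "y' \<noteq> y" using v ly k y'_def by (metis diff_less less_one nth_list_update_eq nth_mem)
  show ?thesis using c' le ne same by blast
qed

lemma locmin_le:
  fixes x y :: "nat list"
  assumes x: "x \<in> conf k n" and y: "y \<in> conf k n"
    and H1: "\<And>m. 1 \<le> m \<Longrightarrow> m < k \<Longrightarrow> Pi m x \<noteq> Pi m y \<Longrightarrow> y ! (m - 1) < y ! m"
    and H2: "Pi k x \<noteq> Pi k y \<Longrightarrow> (\<forall>v. 1 \<le> v \<longrightarrow> v < y ! (k - 1) \<longrightarrow> v \<in> set y)"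
  shows "conf_le k y x"
  unfolding conf_le_def
proof
  fix m assume mk: "m \<in> {1..k}"
  have lx: "length x = k" "distinct x" "set x \<subseteq> {1..n}" using conf_D[OF x] by auto
  have ly: "length y = k" "distinct y" "set y \<subseteq> {1..n}" using conf_D[OF y] by auto
  show "subset_bruhat_le m (Pi m y) (Pi m x)"
  proof (cases "Pi m y = Pi m x")
    case True then show ?thesis using bruhat_refl by simp
  next
    case neq: False
    define Aset where "Aset = {a'. a' \<le> m \<and> Pi a' x = Pi a' y}"
    have finA: "finite Aset" unfolding Aset_def by simp
    have zA: "0 \<in> Aset" unfolding Aset_def Pi_def by simp
    define a where "a = Max Aset"
    have aA: "a \<in> Aset" using finA zA a_def by (metis Max_in empty_iff)
    have am: "a \<le> m" and aeq: "Pi a x = Pi a y" using aA Aset_def by auto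
    have amax: "Pi q x \<noteq> Pi q y" if "a < q" "q \<le> m" for q
    proof
      assume "Pi q x = Pi q y"
      then have "q \<in> Aset" using that Aset_def by simp
      then have "q \<le> a" using finA a_def by simp
      then show False using that by simp
    qed
    have alm: "a < m" using am aeq neq by (metis le_neq_implies_less)
    have inc1: "y ! (q - 1) < y ! q" if "a < q" "q < m" for q
      using H1[of q] amax[of q] that mk by auto
    have ebound: "e \<le> y ! (m - 1)" if e: "e \<in> Pi m y" "e \<notin> Pi m x" for e
    proof -
      obtain p where p: "p < m" "e = y ! p" using e(1) Pi_nth[of m y] ly mk by auto
      have "\<not> p < a"
      proof
        assume "p < a"
        then have "e \<in> Pi a y" using Pi_nth[of a y] ly am mk p by auto
        then have "e \<in> Pi m x" using aeq Pi_mono[OF am, of x] by auto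
        then show False using e by simp
      qed
      then have "a \<le> p" by simp
      show ?thesis
      proof (cases "p = m - 1")
        case True then show ?thesis using p by simp
      next
        case False
        then have "y ! p < y ! (m - 1)" using chain_mono[of a m y p "m - 1", OF inc1] p \<open>a \<le> p\<close> alm by simp
        then show ?thesis using p by simp
      qed
    qed
    have dbound: "y ! (m - 1) < d" if d: "d \<in> Pi m x" "d \<notin> Pi m y" for d
    proof (cases "\<exists>b. m < b \<and> b \<le> k \<and> Pi b x = Pi b y")
      case True
      define b where "b = (LEAST b. m < b \<and> b \<le> k \<and> Pi b x = Pi b y)"
      have bp: "m < b \<and> b \<le> k \<and> Pi b x = Pi b y" unfolding b_def by (rule LeastI_ex) (rule True)
      have bmin: "Pi q x \<noteq> Pi q y" if "m < q" "q < b" for q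
        using not_less_Least[of q "\<lambda>b. m < b \<and> b \<le> k \<and> Pi b x = Pi b y"] that bp b_def by auto
      have inc2: "y ! (q - 1) < y ! q" if "a < q" "q < b" for q
      proof -
        have "Pi q x \<noteq> Pi q y"
        proof (cases "q \<le> m")
          case True then show ?thesis using amax that by simp
        next
          case False then show ?thesis using bmin that by simp
        qed
        then show ?thesis using H1[of q] that bp alm by simp
      qed
      have "d \<in> Pi b x" using d(1) Pi_mono[of m b x] bp by auto
      then have "d \<in> Pi b y" using bp by simp
      then obtain s where s: "s < b" "d = y ! s" using Pi_nth[of b y] ly bp by auto
      have "\<not> s < m"
      proof
        assume "s < m"
        then have "d \<in> Pi m y" using Pi_nth[of m y] ly mk s by auto
        then show False using d by simp
      qed
      then show ?thesis using chain_mono[of a b y "m - 1" s, OF inc2] s alm by simp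
    next
      case False
      have inc2: "y ! (q - 1) < y ! q" if "a < q" "q < k" for q
      proof -
        have "Pi q x \<noteq> Pi q y"
        proof (cases "q \<le> m")
          case True then show ?thesis using amax that by simp
        next
          case False then show ?thesis using \<open>\<not> (\<exists>b. m < b \<and> b \<le> k \<and> Pi b x = Pi b y)\<close> that by auto
        qed
        then show ?thesis using H1[of q] that alm by simp
      qed
      have pk: "Pi k x \<noteq> Pi k y"
      proof (cases "m = k")
        case True then show ?thesis using neq by simp
      next
        case False then show ?thesis using \<open>\<not> (\<exists>b. m < b \<and> b \<le> k \<and> Pi b x = Pi b y)\<close> mk by auto
      qed
      have k0: "0 < k" using mk by simp
      have ymk: "y ! (m - 1) \<le> y ! (k - 1)"
      proof (cases "m = k")
        case True then show ?thesis by simp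
      next
        case False
        then have "a \<le> m - 1" "m - 1 < k - 1" using alm mk by auto
        then show ?thesis using chain_mono[of a k y "m - 1" "k - 1", OF inc2] by simp
      qed
      have inys: "y ! (m - 1) < d" if dy: "d \<in> set y"
      proof -
        obtain s where s: "s < k" "d = y ! s" using dy ly by (auto simp: in_set_conv_nth)
        have "\<not> s < m"
        proof
          assume "s < m"
          then have "d \<in> Pi m y" using Pi_nth[of m y] ly mk s by auto
          then show False using d by simp
        qed
        then show ?thesis using chain_mono[of a k y "m - 1" s, OF inc2] s alm by simp
      qed
      show ?thesis
      proof (cases "d \<in> set y")
        case True then show ?thesis using inys by simp
      next
        case False
        have "d \<in> set x" using d(1) unfolding Pi_def by (meson in_set_takeD)
        then have d1: "1 \<le> d" using lx by auto
        have "\<not> d < y ! (k - 1)" using H2 pk d1 False by blast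
        moreover have "d \<noteq> y ! (k - 1)" using False ly k0 by auto
        ultimately show ?thesis using ymk by simp
      qed
    qed
    show ?thesis
    proof (rule bruhat_sep)
      show "card (Pi m y) = m" using ly mk by (intro Pi_card) auto
      show "card (Pi m x) = m" using lx mk by (intro Pi_card) auto
      show "\<forall>e\<in>Pi m y - Pi m x. \<forall>d\<in>Pi m x - Pi m y. e < d"
      proof (intro ballI)
        fix e d assume "e \<in> Pi m y - Pi m x" "d \<in> Pi m x - Pi m y"
        then show "e < d" using ebound[of e] dbound[of d] by auto
      qed
    qed auto
  qed
qed

lemma exists_lower:
  fixes x y :: "nat list"
  assumes x: "x \<in> conf k n" and y: "y \<in> conf k n" and k0: "0 < k" and nle: "\<not> conf_le k y x"
  shows "\<exists>m1 y'. m1 \<in> {1..k} \<and> Pi m1 x \<noteq> Pi m1 y \<and> y' \<in> conf k n \<and> conf_le k y' y \<and> y' \<noteq> y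
     \<and> (\<forall>q. q \<noteq> m1 \<longrightarrow> q \<le> k \<longrightarrow> Pi q y' = Pi q y)"
proof (rule ccontr)
  assume nex: "\<not> ?thesis"
  have ly: "length y = k" "distinct y" using conf_D[OF y] by auto
  have H1: "y ! (m - 1) < y ! m" if m: "1 \<le> m" "m < k" "Pi m x \<noteq> Pi m y" for m
  proof (rule ccontr)
    assume "\<not> y ! (m - 1) < y ! m"
    moreover have "y ! (m - 1) \<noteq> y ! m" using ly m by (simp add: nth_eq_iff_index_eq)
    ultimately have "y ! m < y ! (m - 1)" by simp
    from swap_lemma[OF y m(1) m(2) this] obtain y' where
      "y' \<in> conf k n \<and> conf_le k y' y \<and> y' \<noteq> y \<and> (\<forall>q. q \<noteq> m \<longrightarrow> q \<le> k \<longrightarrow> Pi q y' = Pi q y)" by blast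
    moreover have "m \<in> {1..k}" using m by simp
    ultimately show False using nex m(3) by blast
  qed
  have H2: "\<forall>v. 1 \<le> v \<longrightarrow> v < y ! (k - 1) \<longrightarrow> v \<in> set y" if pk: "Pi k x \<noteq> Pi k y"
  proof (intro allI impI, rule ccontr)
    fix v assume v: "1 \<le> v" "v < y ! (k - 1)" "v \<notin> set y"
    from replace_lemma[OF y k0 v] obtain y' where
      "y' \<in> conf k n \<and> conf_le k y' y \<and> y' \<noteq> y \<and> (\<forall>q. q \<noteq> k \<longrightarrow> q \<le> k \<longrightarrow> Pi q y' = Pi q y)" by blast
    moreover have "k \<in> {1..k}" using k0 by simp
    ultimately show False using nex pk by blast
  qed
  have "conf_le k y x" using locmin_le[OF x y H1 H2] by blast
  then show False using nle by simp
qed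

lemma Pflag_eq: "Pflag k y = (\<lambda>i. Pi i y) ` {1..k}"
  unfolding Pflag_def by auto

lemma Pflag_card:
  assumes y: "y \<in> conf k n" shows "finite (Pflag k y) \<and> card (Pflag k y) = k"
proof -
  have ly: "length y = k" "distinct y" using conf_D[OF y] by auto
  have inj: "inj_on (\<lambda>i. Pi i y) {1..k}"
    unfolding inj_on_def using Pi_card[OF ly(2)] ly(1) by (metis atLeastAtMost_iff)
  show ?thesis unfolding Pflag_eq using card_image[OF inj] by simp
qed

lemma Pflag_int:
  assumes x: "x \<in> conf k n" and y: "y \<in> conf k n"
  shows "Pflag k x \<inter> Pflag k y = (\<lambda>i. Pi i y) ` {i\<in>{1..k}. Pi i x = Pi i y}"
proof
  have lx: "length x = k" "distinct x" using conf_D[OF x] by auto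
  have ly: "length y = k" "distinct y" using conf_D[OF y] by auto
  show "Pflag k x \<inter> Pflag k y \<subseteq> (\<lambda>i. Pi i y) ` {i\<in>{1..k}. Pi i x = Pi i y}"
  proof
    fix S assume "S \<in> Pflag k x \<inter> Pflag k y"
    then obtain a b where ab: "a \<in> {1..k}" "b \<in> {1..k}" "S = Pi a x" "S = Pi b y"
      unfolding Pflag_eq by auto
    have "a = b" using ab Pi_card[OF lx(2), of a] Pi_card[OF ly(2), of b] lx ly by auto
    then show "S \<in> (\<lambda>i. Pi i y) ` {i\<in>{1..k}. Pi i x = Pi i y}" using ab by auto
  qed
  show "(\<lambda>i. Pi i y) ` {i\<in>{1..k}. Pi i x = Pi i y} \<subseteq> Pflag k x \<inter> Pflag k y"
    unfolding Pflag_eq by force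
qed

lemma Pflag_inj:
  assumes x: "x \<in> conf k n" and y: "y \<in> conf k n" and eq: "Pflag k x = Pflag k y"
  shows "x = y"
proof -
  have "Pflag k x \<inter> Pflag k y = Pflag k y" using eq by simp
  then have "(\<lambda>i. Pi i y) ` {i\<in>{1..k}. Pi i x = Pi i y} = (\<lambda>i. Pi i y) ` {1..k}"
    using Pflag_int[OF x y] Pflag_eq by simp
  have ly: "length y = k" "distinct y" using conf_D[OF y] by auto
  have "\<forall>i\<in>{1..k}. Pi i x = Pi i y"
  proof
    fix i assume i: "i \<in> {1..k}"
    then have "Pi i y \<in> Pflag k x" using eq Pflag_eq by auto
    then obtain a where a: "a \<in> {1..k}" "Pi i y = Pi a x" unfolding Pflag_eq by auto
    have lx: "length x = k" "distinct x" using conf_D[OF x] by auto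
    have "a = i" using a i Pi_card[OF lx(2), of a] Pi_card[OF ly(2), of i] lx ly by auto
    then show "Pi i x = Pi i y" using a by simp
  qed
  then show ?thesis using Pi_inj[OF x y] by simp
qed

theorem theorem4p5:
  fixes k n :: nat and Y :: "nat list set" and L :: "nat list list"
  assumes "0 < k" and "k \<le> n"
    and "Y \<subseteq> conf k n"
    and "order_ideal k n Y"
    and "linear_extension k Y L"
  shows "flag_shelling_order k Y L"
proof -
  have k0: "0 < k" using assms by simp
  have dL: "distinct L" and sL: "set L = Y"
    and ord: "\<forall>i<length L. \<forall>j<length L. conf_less k (L ! i) (L ! j) \<longrightarrow> i < j"
    using assms(5) unfolding linear_extension_def by auto
  have Yc: "Y \<subseteq> conf k n" using assms(3) .
  have ideal: "\<forall>y\<in>Y. \<forall>x\<in>conf k n. conf_le k x y \<longrightarrow> x \<in> Y"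
    using assms(4) unfolding order_ideal_def by auto
  have Lc: "L ! i \<in> conf k n" if "i < length L" for i using that sL Yc by auto
  define F where "F = map (Pflag k) L"
  have d1: "distinct F"
    unfolding F_def distinct_map
  proof
    show "distinct L" by (rule dL)
    show "inj_on (Pflag k) (set L)"
      unfolding inj_on_def using Pflag_inj sL Yc by blast
  qed
  have d2: "\<forall>G\<in>set F. finite G \<and> card G = k"
    unfolding F_def using Pflag_card sL Yc by auto
  have d3: "\<exists>z<j. card (F ! z \<inter> F ! j) = card (F ! j) - 1 \<and> F ! i \<inter> F ! j \<subseteq> F ! z \<inter> F ! j"
    if j: "j < length F" and i: "i < j" for i j
  proof -
    have jl: "j < length L" and il: "i < length L" using j i F_def by auto
    define x where "x = L ! i"
    define y where "y = L ! j"
    have x: "x \<in> conf k n" and y: "y \<in> conf k n" using Lc jl il x_def y_def by auto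
    have xy: "x \<noteq> y" using dL il jl i x_def y_def by (simp add: nth_eq_iff_index_eq)
    have nle: "\<not> conf_le k y x"
    proof
      assume "conf_le k y x"
      then have "conf_less k (L ! j) (L ! i)" using xy x_def y_def conf_less_def by auto
      then have "j < i" using ord jl il by blast
      then show False using i by simp
    qed
    obtain m1 y' where m1: "m1 \<in> {1..k}" "Pi m1 x \<noteq> Pi m1 y" and y': "y' \<in> conf k n"
      and le': "conf_le k y' y" and ne': "y' \<noteq> y"
      and same: "\<forall>q. q \<noteq> m1 \<longrightarrow> q \<le> k \<longrightarrow> Pi q y' = Pi q y"
      using exists_lower[OF x y k0 nle] by blast
    have yY: "y \<in> Y" using sL jl y_def by auto
    have y'Y: "y' \<in> Y" using ideal yY y' le' by blast
    then obtain z where z: "z < length L" "L ! z = y'" using sL by (metis in_set_conv_nth)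
    have "conf_less k (L ! z) (L ! j)" using z le' ne' y_def conf_less_def by simp
    then have zj: "z < j" using ord z jl by blast
    have pm1: "Pi m1 y' \<noteq> Pi m1 y"
    proof
      assume "Pi m1 y' = Pi m1 y"
      then have "\<forall>q\<in>{1..k}. Pi q y' = Pi q y" using same by auto
      then show False using Pi_inj[OF y' y] ne' by simp
    qed
    have setq: "{q\<in>{1..k}. Pi q y' = Pi q y} = {1..k} - {m1}" using same pm1 by auto
    have ly: "length y = k" "distinct y" using conf_D[OF y] by auto
    have inj: "inj_on (\<lambda>q. Pi q y) ({1..k} - {m1})"
      unfolding inj_on_def using Pi_card[OF ly(2)] ly(1) by (metis DiffD1 atLeastAtMost_iff)
    have Fz: "F ! z = Pflag k y'" and Fj: "F ! j = Pflag k y" and Fi: "F ! i = Pflag k x"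
      using F_def z jl il x_def y_def by auto
    have c1: "card (F ! z \<inter> F ! j) = k - 1"
      unfolding Fz Fj Pflag_int[OF y' y] setq using card_image[OF inj] m1 by simp
    have c2: "card (F ! j) = k" using Fj Pflag_card[OF y] by simp
    have sub: "F ! i \<inter> F ! j \<subseteq> F ! z \<inter> F ! j"
      unfolding Fz Fj Fi Pflag_int[OF y' y] Pflag_int[OF x y] setq using m1 by auto
    show ?thesis using zj c1 c2 sub by auto
  qed
  show ?thesis
    unfolding flag_shelling_order_def shelling_order_def
    using dL sL d1 d2 d3 F_def by auto
qed

end
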